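(* Every integer $n\ge 2$ is a cutoff.
   Context: For a real number $\alpha\ge 1$, define the integer sequence $(P^\alpha_i)_{i\ge 0}$ by $P^\alpha_0=0$, $P^\alpha_1=1$, and for $k\ge 1$, $P^\alpha_{k+1}=P^\alpha_k+P^\alpha_j$, where $j\ge1$ is the unique index with $\alpha P^\alpha_{j-1}<P^\alpha_k\le \alpha P^\alpha_j$. A cutoff is a real number $\alpha\ge 1$ such that for every real $\beta$ with $1\le\beta<\alpha$, the sequences $(P^\alpha_i)$ and $(P^\beta_i)$ are not identical. *)

theory Defs
  imports Complex_Main
begin

text \<open>For k >= 1, P_(k+1) = P_k + P_j where j >= 1 is the index with
  alpha * P_(j-1) < P_k <= alpha * P_j. Such a j necessarily satisfies j <= k
  (the sequence is increasing and alpha >= 1), so it is selected among 1..k.\<close>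

fun P_list :: "real \<Rightarrow> nat \<Rightarrow> nat list" where
  "P_list \<alpha> 0 = [0]"
| "P_list \<alpha> (Suc 0) = [0, 1]"
| "P_list \<alpha> (Suc (Suc k)) =
    (let xs = P_list \<alpha> (Suc k);
         m = Suc k;
         j = (LEAST j. 1 \<le> j \<and> j \<le> m \<and>
                 \<alpha> * real (xs ! (j - 1)) < real (xs ! m) \<and>
                 real (xs ! m) \<le> \<alpha> * real (xs ! j))
     in xs @ [xs ! m + xs ! j])"

definition P :: "real \<Rightarrow> nat \<Rightarrow> nat" where
  "P \<alpha> i = P_list \<alpha> i ! i"

definition cutoff :: "real \<Rightarrow> bool" where
  "cutoff \<alpha> \<longleftrightarrow> 1 \<le> \<alpha> \<and> (\<forall>\<beta>::real. 1 \<le> \<beta> \<and> \<beta> < \<alpha> \<longrightarrow> P \<alpha> \<noteq> P \<beta>)"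

end

theory Submission
  imports Defs
begin

lemma P_list_init:
  assumes "1 \<le> k" "real k \<le> \<beta> + 1" "1 \<le> \<beta>"
  shows "P_list \<beta> k = [0..<Suc k]"
  using assms
proof (induction \<beta> k rule: P_list.induct)
  case (1 \<alpha>) then show ?case by simp
next
  case (2 \<alpha>) then show ?case by simp
next
  case (3 \<alpha> k)
  have IH: "P_list \<alpha> (Suc k) = [0..<Suc (Suc k)]" using 3 by simp
  have nth: "[0..<Suc (Suc k)] ! i = i" if "i \<le> Suc k" for i
    using that by (simp del: upt_Suc)
  have L: "(LEAST j. 1 \<le> j \<and> j \<le> Suc k \<and>
                 \<alpha> * real ([0..<Suc (Suc k)] ! (j - 1)) < real ([0..<Suc (Suc k)] ! Suc k) \<and>
                 real ([0..<Suc (Suc k)] ! Suc k) \<le> \<alpha> * real ([0..<Suc (Suc k)] ! j)) = 1"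
    apply (rule Least_equality)
    using 3 nth[of 0] nth[of 1] nth[of "Suc k"] by (auto simp del: upt_Suc)
  have U: "[0..<Suc (Suc k)] @ [Suc (Suc k)] = [0..<Suc (Suc (Suc k))]" by simp
  show ?case using IH L U nth[of 1] nth[of "Suc k"] by (simp add: Let_def del: upt_Suc)
qed

lemma P_list_next:
  assumes "1 \<le> k" "real (Suc k) \<le> \<beta> + 1" "1 \<le> \<beta>" "\<beta> < real (Suc k)"
  shows "P_list \<beta> (Suc (Suc k)) = [0..<Suc (Suc k)] @ [Suc k + 2]"
proof -
  have IH: "P_list \<beta> (Suc k) = [0..<Suc (Suc k)]" using assms P_list_init[of "Suc k" \<beta>] by simp
  have nth: "[0..<Suc (Suc k)] ! i = i" if "i \<le> Suc k" for i
    using that by (simp del: upt_Suc)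
  have L: "(LEAST j. 1 \<le> j \<and> j \<le> Suc k \<and>
                 \<beta> * real ([0..<Suc (Suc k)] ! (j - 1)) < real ([0..<Suc (Suc k)] ! Suc k) \<and>
                 real ([0..<Suc (Suc k)] ! Suc k) \<le> \<beta> * real ([0..<Suc (Suc k)] ! j)) = 2"
  proof (rule Least_equality)
    show "1 \<le> (2::nat) \<and> 2 \<le> Suc k \<and>
        \<beta> * real ([0..<Suc (Suc k)] ! (2 - 1)) < real ([0..<Suc (Suc k)] ! Suc k) \<and>
        real ([0..<Suc (Suc k)] ! Suc k) \<le> \<beta> * real ([0..<Suc (Suc k)] ! 2)"
      using assms nth[of 1] nth[of 2] nth[of "Suc k"] by (simp del: upt_Suc)
  next
    fix y assume y: "1 \<le> y \<and> y \<le> Suc k \<and>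
                 \<beta> * real ([0..<Suc (Suc k)] ! (y - 1)) < real ([0..<Suc (Suc k)] ! Suc k) \<and>
                 real ([0..<Suc (Suc k)] ! Suc k) \<le> \<beta> * real ([0..<Suc (Suc k)] ! y)"
    show "2 \<le> y"
    proof (rule ccontr)
      assume "\<not> 2 \<le> y"
      then have "y = 1" using y by simp
      then show False using y assms nth[of 1] nth[of "Suc k"] by (simp del: upt_Suc)
    qed
  qed
  show ?thesis using IH L nth[of 2] nth[of "Suc k"] assms(1) by (simp add: Let_def del: upt_Suc)
qed

theorem mainTheorem10:
  fixes n :: int
  assumes "n \<ge> 2"
  shows "cutoff (real_of_int n)"
  unfolding cutoff_def
proof (intro conjI allI impI)
  show "1 \<le> real_of_int n" using assms by simp
  fix \<beta> :: real
  assume b: "1 \<le> \<beta> \<and> \<beta> < real_of_int n"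
  define k where "k = nat \<lfloor>\<beta>\<rfloor>"
  have k1: "1 \<le> k" using b unfolding k_def by linarith
  have kr: "real k = of_int \<lfloor>\<beta>\<rfloor>" using b unfolding k_def by simp
  have a: "real (Suc k) \<le> \<beta> + 1" "\<beta> < real (Suc k)" using kr by linarith+
  have Pb: "P \<beta> (Suc (Suc k)) = Suc k + 2"
    using P_list_next[OF k1 a(1) _ a(2)] b by (simp add: P_def nth_append)
  have "\<lfloor>\<beta>\<rfloor> < n" using b by linarith
  then have "real (Suc (Suc k)) \<le> real_of_int n + 1" using kr by linarith
  then have "P_list (real_of_int n) (Suc (Suc k)) = [0..<Suc (Suc (Suc k))]"
    using assms by (intro P_list_init) auto
  then have Pn: "P (real_of_int n) (Suc (Suc k)) = Suc (Suc k)"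
    by (simp add: P_def del: upt_Suc)
  show "P (real_of_int n) \<noteq> P \<beta>"
  proof
    assume "P (real_of_int n) = P \<beta>"
    then show False using Pb Pn by simp
  qed
qed

end
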